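(* In the setting described in the context, suppose a gradient step is taken on the repeated example $(\mathbf{z}^{\mathrm{mem}},\mathbf{e}^{\mathrm{mem}})$ at step $i$, and then $m$ gradient steps are taken on non-repeated examples $(\mathbf{z}^{(i+1)},\mathbf{e}^{(i+1)}),\dots,(\mathbf{z}^{(i+m)},\mathbf{e}^{(i+m)})$. Then $$(\mathbf{e}^{\mathrm{mem}})^\top f^{(i+m)}(\mathbf{z}^{\mathrm{mem}})\ \le\ (\mathbf{e}^{\mathrm{mem}})^\top f^{(i)}(\mathbf{z}^{\mathrm{mem}})-\gamma\, m\,\epsilon\, c_{\min}.$$
   Context: Model: $f(\mathbf{z})=\mathbf{W}_{\mathrm{proj}}\mathbf{z}\in\mathbb{R}^{V}$ (logits over a vocabulary of size $V\ge2$), where $\mathbf{z}=\mathbf{z}(\mathbf{s})$ is the (fixed, since the first layer is frozen) hidden activation of sequence $\mathbf{s}$; $f^{(t)}$ denotes the model with parameter $\mathbf{W}_{\mathrm{proj}}^{(t)}$ after the $t$-th update. Training: batch size 1, cross-entropy loss with softmax $\sigma$, learning rate $\gamma>0$; an update on example $(\mathbf{z},\mathbf{e})$ is $\mathbf{W}_{\mathrm{proj}}\leftarrow\mathbf{W}_{\mathrm{proj}}+\gamma(\mathbf{e}-\sigma(f(\mathbf{z})))\mathbf{z}^\top$. Next-token targets $\mathbf{e}$ are one-hot (standard basis) vectors in $\mathbb{R}^V$; each non-repeated example has target $\mathbf{e}^{(j)}\neq\mathbf{e}^{\mathrm{mem}}$. Assumptions: $\|\mathbf{z}\|_2=1$ for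 all activations; $\|\mathbf{W}_{\mathrm{proj}}\|_2<C_{\mathrm{proj}}/2$ throughout training; $\mathbf{z}^{(j)\top}\mathbf{z}^{\mathrm{mem}}\ge\epsilon>0$ for all non-repeated examples $j$. Constant: $c_{\min}=\exp(-C_{\mathrm{proj}})/V$. *)

theory Defs
  imports "HOL-Analysis.Analysis"
begin

definition softmax :: "real ^ 'v \<Rightarrow> real ^ 'v" where
  "softmax x = (\<chi> k. exp (x $ k) / (\<Sum>j\<in>UNIV. exp (x $ j)))"

definition outer :: "real ^ 'v \<Rightarrow> real ^ 'd \<Rightarrow> real ^ 'd ^ 'v" where
  "outer u v = (\<chi> a b. u $ a * v $ b)"

text \<open>One gradient step of cross-entropy with batch size 1.\<close>
definition gd_step :: "real \<Rightarrow> real ^ 'd ^ 'v \<Rightarrow> real ^ 'd \<Rightarrow> real ^ 'v \<Rightarrow> real ^ 'd ^ 'v" where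
  "gd_step \<gamma> W z e = W + \<gamma> *\<^sub>R outer (e - softmax (W *v z)) z"

definition one_hot :: "real ^ 'v \<Rightarrow> bool" where
  "one_hot e \<longleftrightarrow> (\<exists>k. e = axis k 1)"

definition spec_norm :: "real ^ 'd ^ 'v \<Rightarrow> real" where
  "spec_norm W = onorm (\<lambda>x. W *v x)"

definition c_min :: "real \<Rightarrow> nat \<Rightarrow> real" where
  "c_min C V = exp (- C) / real V"

end

theory Submission
  imports Defs
begin

lemma outer_mult: "outer u v *v w = (v \<bullet> w) *\<^sub>R u"
  by (simp add: outer_def matrix_vector_mult_def vec_eq_iff inner_vec_def
      sum_distrib_left mult.commute mult.left_commute)

lemma outer_mult2: "(c *\<^sub>R outer u v) *v w = (c * (v \<bullet> w)) *\<^sub>R u"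
  by (simp add: outer_def matrix_vector_mult_def vec_eq_iff inner_vec_def
      sum_distrib_left mult.commute mult.left_commute)

lemma comp_bound:
  fixes W :: "real ^ 'd::finite ^ 'v::finite"
  assumes "spec_norm W < C / 2" "norm z = 1"
  shows "\<bar>(W *v z) $ j\<bar> < C / 2"
proof -
  have bl: "bounded_linear (\<lambda>x. W *v x)"
    using matrix_vector_mul_linear linear_linear by blast
  have "\<bar>(W *v z) $ j\<bar> \<le> norm (W *v z)" by (rule component_le_norm_cart)
  also have "\<dots> \<le> onorm (\<lambda>x. W *v x) * norm z" by (rule onorm[OF bl])
  finally show ?thesis using assms unfolding spec_norm_def by simp
qed

lemma softmax_lb:
  fixes W :: "real ^ 'd::finite ^ 'v::finite"
  assumes "spec_norm W < C / 2" "norm z = 1"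
  shows "softmax (W *v z) $ k \<ge> c_min C CARD('v)"
proof -
  let ?x = "W *v z"
  have num: "exp (- C / 2) \<le> exp (?x $ k)"
    using comp_bound[OF assms, of k] by simp
  have "\<And>j. exp (?x $ j) \<le> exp (C / 2)"
  proof -
    fix j
    have "\<bar>?x $ j\<bar> < C / 2" by (rule comp_bound[OF assms])
    hence "?x $ j \<le> C / 2" by linarith
    thus "exp (?x $ j) \<le> exp (C / 2)" by simp
  qed
  hence den: "(\<Sum>j\<in>UNIV. exp (?x $ j)) \<le> real CARD('v) * exp (C / 2)"
    using sum_bounded_above[of UNIV "\<lambda>j. exp (?x $ j)" "exp (C/2)"] by simp
  have dpos: "(\<Sum>j\<in>UNIV. exp (?x $ j)) > 0"
    by (simp add: sum_pos)
  have "c_min C CARD('v) = exp (- C / 2) / (real CARD('v) * exp (C / 2))"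
    by (simp add: c_min_def field_simps flip: exp_add)
  also have "\<dots> \<le> exp (?x $ k) / (\<Sum>j\<in>UNIV. exp (?x $ j))"
    using num den dpos by (intro frac_le) auto
  finally show ?thesis by (simp add: softmax_def)
qed

lemma step_change:
  fixes W :: "real ^ 'd::finite ^ 'v::finite"
  assumes "spec_norm W < C / 2" "norm z = 1" "one_hot e" "one_hot em" "e \<noteq> em"
    "z \<bullet> zm \<ge> \<epsilon>" "\<epsilon> > 0" "\<gamma> > 0"
  shows "em \<bullet> (gd_step \<gamma> W z e *v zm) \<le> em \<bullet> (W *v zm) - \<gamma> * \<epsilon> * c_min C CARD('v)"
proof -
  obtain k where k: "em = axis k 1" using assms(4) unfolding one_hot_def by blast
  obtain l where l: "e = axis l 1" using assms(3) unfolding one_hot_def by blast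
  have "l \<noteq> k" using assms(5) k l by auto
  hence ee: "em \<bullet> e = 0" using k l by (simp add: inner_axis_axis)
  have "em \<bullet> (gd_step \<gamma> W z e *v zm) = em \<bullet> (W *v zm) + \<gamma> * (z \<bullet> zm) * (em \<bullet> e - em \<bullet> softmax (W *v z))"
    by (simp add: gd_step_def matrix_vector_mult_add_rdistrib outer_mult2 inner_add_right
        inner_diff_right algebra_simps scaleR_matrix_vector_assoc)
  also have "em \<bullet> softmax (W *v z) = softmax (W *v z) $ k" using k by (simp add: inner_axis')
  finally have eq: "em \<bullet> (gd_step \<gamma> W z e *v zm) = em \<bullet> (W *v zm) - \<gamma> * ((z \<bullet> zm) * softmax (W *v z) $ k)"
    using ee by simp
  have c0: "c_min C CARD('v) \<ge> 0" by (simp add: c_min_def)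
  have "\<epsilon> * c_min C CARD('v) \<le> (z \<bullet> zm) * softmax (W *v z) $ k"
    using softmax_lb[OF assms(1,2), of k] assms(6,7) c0 by (intro mult_mono) auto
  hence "\<gamma> * (\<epsilon> * c_min C CARD('v)) \<le> \<gamma> * ((z \<bullet> zm) * softmax (W *v z) $ k)"
    using assms(8) by simp
  thus ?thesis using eq by simp
qed

theorem theoremG2:
  fixes W :: "nat \<Rightarrow> real ^ 'd::finite ^ 'v::finite"
    and z :: "nat \<Rightarrow> real ^ 'd" and e :: "nat \<Rightarrow> real ^ 'v"
    and z_mem :: "real ^ 'd" and e_mem :: "real ^ 'v"
    and \<gamma> C_proj \<epsilon> :: real and i m :: nat
  assumes V2: "CARD('v) \<ge> 2"
    and gamma_pos: "\<gamma> > 0"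
    and i_pos: "i \<ge> 1"
    and mem_step: "W i = gd_step \<gamma> (W (i - 1)) z_mem e_mem"
    and steps: "\<And>t. i + 1 \<le> t \<Longrightarrow> t \<le> i + m \<Longrightarrow> W t = gd_step \<gamma> (W (t - 1)) (z t) (e t)"
    and mem_onehot: "one_hot e_mem"
    and onehot: "\<And>t. i + 1 \<le> t \<Longrightarrow> t \<le> i + m \<Longrightarrow> one_hot (e t) \<and> e t \<noteq> e_mem"
    and z_mem_norm: "norm z_mem = 1"
    and z_norm: "\<And>t. norm (z t) = 1"
    and W_bound: "\<And>t. spec_norm (W t) < C_proj / 2"
    and eps_pos: "\<epsilon> > 0"
    and overlap: "\<And>t. i + 1 \<le> t \<Longrightarrow> t \<le> i + m \<Longrightarrow> z t \<bullet> z_mem \<ge> \<epsilon>"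
  shows "e_mem \<bullet> (W (i + m) *v z_mem)
           \<le> e_mem \<bullet> (W i *v z_mem) - \<gamma> * real m * \<epsilon> * c_min C_proj CARD('v)"
proof -
  have "n \<le> m \<Longrightarrow> e_mem \<bullet> (W (i + n) *v z_mem)
           \<le> e_mem \<bullet> (W i *v z_mem) - \<gamma> * real n * \<epsilon> * c_min C_proj CARD('v)" for n
  proof (induction n)
    case 0 then show ?case by simp
  next
    case (Suc n)
    let ?t = "i + Suc n"
    have t1: "i + 1 \<le> ?t" "?t \<le> i + m" using Suc.prems by auto
    have "W ?t = gd_step \<gamma> (W (i + n)) (z ?t) (e ?t)" using steps[OF t1] by simp
    hence "e_mem \<bullet> (W ?t *v z_mem) \<le> e_mem \<bullet> (W (i + n) *v z_mem) - \<gamma> * \<epsilon> * c_min C_proj CARD('v)"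
      using step_change[OF W_bound z_norm conjunct1[OF onehot[OF t1]] mem_onehot
          conjunct2[OF onehot[OF t1]] overlap[OF t1] eps_pos gamma_pos] by simp
    with Suc show ?case by (simp add: algebra_simps)
  qed
  thus ?thesis by simp
qed

end
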